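(* For all integers $n,k,i\ge 0$, \[ e_{n,i}^k = \sum_{j=0}^{i} (-1)^j \binom{n+1}{j} (k+i+1-j)^n . \]
   Context: Convention: $0^0=1$. For a fixed integer parameter $k$, the numbers $e^k_{n,i}$ are defined by $e^k_{0,0}=1$, $e^k_{n,i}=0$ whenever $i<0$ or $i>n$, and $e^k_{n,i}=(k+i+1)\,e^k_{n-1,i}+(n-k-i)\,e^k_{n-1,i-1}$ for all other integers $n,i$. *)

theory Defs
  imports Main
begin

fun euler_e :: "int \<Rightarrow> nat \<Rightarrow> int \<Rightarrow> int" where
  "euler_e k 0 i = (if i = 0 then 1 else 0)"
| "euler_e k (Suc m) i =
     (if i < 0 \<or> i > int (Suc m) then 0
      else (k + i + 1) * euler_e k m i + (int (Suc m) - k - i) * euler_e k m (i - 1))"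

end

theory Submission
  imports Defs
begin

lemma euler_e_zero: "i < 0 \<or> i > int n \<Longrightarrow> euler_e k n i = 0"
  by (induction n arbitrary: i) auto

lemma binom_aux: "int (Suc i) * int (Suc n choose Suc i) = (int n + 1 - int i) * int (Suc n choose i)"
proof (cases "i \<le> Suc n")
  case True
  have a: "Suc i * (Suc n choose Suc i) = Suc n * (n choose i)" by (rule Suc_times_binomial)
  have b: "(Suc n - i) * (Suc n choose i) = Suc n * (n choose i)"
    using binomial_absorb_comp[of "Suc n" i] by simp
  have "int (Suc i * (Suc n choose Suc i)) = int ((Suc n - i) * (Suc n choose i))" using a b by (simp only:)
  then have "int (Suc i) * int (Suc n choose Suc i) = int (Suc n - i) * int (Suc n choose i)"
    by (metis of_nat_mult)
  moreover have "int (Suc n - i) = int n + 1 - int i" using True by (simp add: of_nat_diff)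
  ultimately show ?thesis by metis
next
  case False
  then have "Suc n choose Suc i = 0" "Suc n choose i = 0" by (simp_all add: binomial_eq_0)
  then show ?thesis by (simp only:)
qed

lemma key:
  fixes x :: int
  shows "(\<Sum>j = 0..i. (-1) ^ j * int ((n + 2) choose j) * (x - int j) ^ (Suc n)) =
     x * (\<Sum>j = 0..i. (-1) ^ j * int ((n + 1) choose j) * (x - int j) ^ n)
     + (int n + 2 - x) * (\<Sum>j < i. (-1) ^ j * int ((n + 1) choose j) * (x - 1 - int j) ^ n)"
proof (induction i)
  case 0
  then show ?case by simp
next
  case (Suc i)
  define y where "y = x - int i - 1"
  have c: "int (Suc (Suc n) choose Suc i) = int (Suc n choose Suc i) + int (Suc n choose i)"
    by simp
  have b: "int (Suc i) * int (Suc n choose Suc i) = (int n + 1 - int i) * int (Suc n choose i)"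
    by (rule binom_aux)
  have t: "(-1) ^ Suc i * int ((n + 2) choose Suc i) * (x - int (Suc i)) ^ Suc n =
     x * ((-1) ^ Suc i * int ((n + 1) choose Suc i) * (x - int (Suc i)) ^ n)
     + (int n + 2 - x) * ((-1) ^ i * int ((n + 1) choose i) * (x - 1 - int i) ^ n)"
  proof -
    have e1: "x - int (Suc i) = y" "x - 1 - int i = y" unfolding y_def by simp_all
    have e2: "x = y + int i + 1" unfolding y_def by simp
    have "int (Suc (Suc n) choose Suc i) * y = x * int (Suc n choose Suc i) - (int n + 2 - x) * int (Suc n choose i)"
      unfolding c e2 using b by (simp add: algebra_simps)
    then have "(-1) ^ Suc i * int (Suc (Suc n) choose Suc i) * y ^ Suc n =
      (-1) ^ Suc i * (x * int (Suc n choose Suc i) - (int n + 2 - x) * int (Suc n choose i)) * y ^ n"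
      by (metis (no_types, lifting) mult.assoc mult.commute power_Suc)
    then show ?thesis unfolding e1 by (simp add: algebra_simps)
  qed
  show ?case
    using Suc t by (simp add: algebra_simps)
qed

definition T :: "int \<Rightarrow> nat \<Rightarrow> int \<Rightarrow> int" where
  "T k n i = (if i < 0 then 0 else
     (\<Sum>j = 0..nat i. (-1) ^ j * int ((n + 1) choose j) * (k + i + 1 - int j) ^ n))"

lemma T_rec:
  assumes "0 \<le> i"
  shows "T k (Suc n) i = (k + i + 1) * T k n i + (int (Suc n) - k - i) * T k n (i - 1)"
proof -
  obtain m where m: "i = int m" using assms nonneg_eq_int by blast
  have 1: "T k n (i - 1) = (\<Sum>j < m. (-1) ^ j * int ((n + 1) choose j) * ((k + i + 1) - 1 - int j) ^ n)"
  proof (cases m)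
    case 0 then show ?thesis using m by (simp add: T_def)
  next
    case (Suc p)
    have "{..<m} = {0..p}" using Suc by auto
    then show ?thesis using m Suc by (simp add: T_def algebra_simps)
  qed
  show ?thesis
    using key[where i=m and n=n and x="k + i + 1"] m 1 by (simp add: T_def algebra_simps)
qed

lemma main: "euler_e k n i = T k n i"
proof (induction n arbitrary: i)
  case 0
  show ?case
  proof (cases "i < 0")
    case True then show ?thesis by (simp add: T_def)
  next
    case False
    then obtain m where m: "i = int m" using nonneg_eq_int by (metis not_less)
    have z: "(\<Sum>j=0..Suc p. (-1) ^ j * int (1 choose j)) = (0::int)" for p
      by (induction p) auto
    show ?thesis using m z by (cases m) (auto simp: T_def)
  qed
next
  case (Suc n)
  show ?case
  proof (cases "i < 0")
    case True then show ?thesis by (simp add: T_def)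
  next
    case False
    have r: "T k (Suc n) i = (k + i + 1) * euler_e k n i + (int (Suc n) - k - i) * euler_e k n (i - 1)"
      using T_rec[of i k n] False Suc by simp
    show ?thesis
    proof (cases "i > int (Suc n)")
      case True
      have "euler_e k n i = 0" "euler_e k n (i - 1) = 0" using True by (auto intro: euler_e_zero)
      then show ?thesis using r True by simp
    next
      case False2: False
      show ?thesis using r False False2 by simp
    qed
  qed
qed

theorem corollary2p3:
  fixes n k i :: nat
  shows "euler_e (int k) n (int i) =
    (\<Sum>j = 0..i. (-1) ^ j * int ((n + 1) choose j) * (int k + int i + 1 - int j) ^ n)"
  using main[of "int k" n "int i"] by (simp add: T_def)

end
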